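(* Let $\lambda>0$ and set $\Lambda=-3\lambda$. Let $m,a,q\in\mathbb{R}$ be parameters with $\lambda a^2<1$, put $\Xi=1-\lambda a^2>0$ and $$\Delta_r=(r^2+a^2)(1+\lambda r^2)-2mr+q^2 .$$ Assume that the Kerr-Newman-anti-de Sitter solution with these parameters is a black hole, i.e. that the quartic $\Delta_r$ has real zeros, namely either two distinct real zeros $r_1<r_2$ or one real double zero $r_1=r_2$. Define the angular momentum $J=ma/\Xi^2$, the electric charge $Q=q/\Xi$, and the reduced areas of the Cauchy and event horizons $$\bar A_{\mathrm C}=\frac{r_1^2+a^2}{\Xi},\qquad \bar A_{\mathrm E}=\frac{r_2^2+a^2}{\Xi}.$$ The actual horizon areas are $A_{\mathrm C}=4\pi\bar A_{\mathrm C}$ and $A_{\mathrm E}=4\pi\bar A_{\mathrm E}$. Then $$4J^2+Q^4=\bar A_{\mathrm C}\bar A_{\mathrm E}\Big[1+2\lambda\big(\bar A_{\mathrm C}+\bar A_{\mathrm E}+Q^2\big)+\lambda^2\big(\bar A_{\mathrm C}^2+\bar A_{\mathrm C}\bar A_{\mathrm E}+\bar A_{\mathrm E}^2\big)\Big].$$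
   Context: The Kerr-Newman-anti-de Sitter (KN-AdS) solution with cosmological constant $\Lambda=-3\lambda<0$ is written in Boyer-Lindquist-type coordinates $(r,\theta,\phi,t)$ as $$\mathrm ds^2=\varrho^2\Big(\frac{\mathrm dr^2}{\Delta_r}+\frac{\mathrm d\theta^2}{\Delta_\theta}\Big)+\frac{\Delta_\theta\sin^2\theta}{\Xi^2\varrho^2}\big[a\,\mathrm dt-(r^2+a^2)\,\mathrm d\phi\big]^2-\frac{\Delta_r}{\Xi^2\varrho^2}\big(\mathrm dt-a\sin^2\theta\,\mathrm d\phi\big)^2 .$$ Here $\varrho^2=r^2+a^2\cos^2\theta$ and $\Delta_\theta=1-\lambda a^2\cos^2\theta$. The electromagnetic potential is $A=-\frac{qr}{\varrho^2}(\mathrm dt-a\sin^2\theta\,\mathrm d\phi)$. The parameter $m$ is the mass parameter, $a$ the rotation parameter and $q$ the charge parameter. The mass is $M=m/\Xi^2$. For $\lambda>0$ the quartic $\Delta_r$ has at most two real zeros. The larger zero $r_2$ gives the event horizon and the smaller zero $r_1$ gives the Cauchy horizon. The black hole is degenerate exactly when $r_1=r_2$. *)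

theory Defs
  imports Complex_Main
begin

definition KNAdS_Delta_r :: "real \<Rightarrow> real \<Rightarrow> real \<Rightarrow> real \<Rightarrow> real \<Rightarrow> real" where
  "KNAdS_Delta_r lam m a q r = (r^2 + a^2) * (1 + lam * r^2) - 2 * m * r + q^2"

definition KNAdS_Xi :: "real \<Rightarrow> real \<Rightarrow> real" where
  "KNAdS_Xi lam a = 1 - lam * a^2"

definition KNAdS_J :: "real \<Rightarrow> real \<Rightarrow> real \<Rightarrow> real" where
  "KNAdS_J lam m a = m * a / (KNAdS_Xi lam a)^2"

definition KNAdS_Q :: "real \<Rightarrow> real \<Rightarrow> real \<Rightarrow> real" where
  "KNAdS_Q lam a q = q / KNAdS_Xi lam a"

definition KNAdS_reduced_area :: "real \<Rightarrow> real \<Rightarrow> real \<Rightarrow> real" where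
  "KNAdS_reduced_area lam a r = (r^2 + a^2) / KNAdS_Xi lam a"

end

theory Submission
  imports Defs
begin

lemma poly:
  fixes lam m a Q r1 r2 :: real
  assumes hm: "2*m = lam*(r1+r2)*(r1^2+r2^2) + (1+lam*a^2)*(r1+r2)"
  and hq: "Q = 2*m*r1 - (r1^2+a^2)*(1+lam*r1^2)"
  shows "4*m^2*a^2 + Q^2 = (r1^2+a^2)*(r2^2+a^2)*((1-lam*a^2)^2 + 2*lam*((1-lam*a^2)*((r1^2+a^2)+(r2^2+a^2)) + Q)
     + lam^2*((r1^2+a^2)^2 + (r1^2+a^2)*(r2^2+a^2) + (r2^2+a^2)^2))"
  using assms by algebra

theorem mainTheorem1:
  fixes lam m a q r1 r2 :: real
  assumes lam_pos: "lam > 0"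
    and rot: "lam * a^2 < 1"
    and r_order: "r1 \<le> r2"
    and zero1: "KNAdS_Delta_r lam m a q r1 = 0"
    and zero2: "KNAdS_Delta_r lam m a q r2 = 0"
    and all_zeros: "\<forall>r. KNAdS_Delta_r lam m a q r = 0 \<longrightarrow> r = r1 \<or> r = r2"
    and double: "r1 = r2 \<longrightarrow> (KNAdS_Delta_r lam m a q has_real_derivative 0) (at r1)"
  shows "4 * (KNAdS_J lam m a)^2 + (KNAdS_Q lam a q)^4 =
      KNAdS_reduced_area lam a r1 * KNAdS_reduced_area lam a r2 *
      (1 + 2 * lam * (KNAdS_reduced_area lam a r1 + KNAdS_reduced_area lam a r2 + (KNAdS_Q lam a q)^2)
         + lam^2 * ((KNAdS_reduced_area lam a r1)^2
                    + KNAdS_reduced_area lam a r1 * KNAdS_reduced_area lam a r2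
                    + (KNAdS_reduced_area lam a r2)^2))"
proof -
  have D: "2*m = lam*(r1+r2)*(r1^2+r2^2) + (1+lam*a^2)*(r1+r2)"
  proof (cases "r1 = r2")
    case True
    have d: "(KNAdS_Delta_r lam m a q has_real_derivative
        (4*lam*r1^3 + 2*(1+lam*a^2)*r1 - 2*m)) (at r1)"
    proof -
      have e: "KNAdS_Delta_r lam m a q = (\<lambda>r. lam*r^4 + (1+lam*a^2)*r^2 - 2*m*r + (a^2+q^2))"
        by (rule ext) (simp add: KNAdS_Delta_r_def algebra_simps power2_eq_square power4_eq_xxxx)
      show ?thesis unfolding e
        by (rule derivative_eq_intros refl | simp)+
    qed
    have "4*lam*r1^3 + 2*(1+lam*a^2)*r1 - 2*m = 0"
      using DERIV_unique[OF d] double True by blast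
    then show ?thesis using True by (simp add: algebra_simps power2_eq_square power3_eq_cube)
  next
    case False
    have "(r1 - r2) * (lam*(r1+r2)*(r1^2+r2^2) + (1+lam*a^2)*(r1+r2) - 2*m) = 0"
      using zero1 zero2 unfolding KNAdS_Delta_r_def by algebra
    then show ?thesis using False by simp
  qed
  have hq: "q^2 = 2*m*r1 - (r1^2+a^2)*(1+lam*r1^2)"
    using zero1 unfolding KNAdS_Delta_r_def by algebra
  define X where "X = 1 - lam*a^2"
  have X: "X \<noteq> 0" using rot X_def by simp
  have P: "4*m^2*a^2 + (q^2)^2 = (r1^2+a^2)*(r2^2+a^2)*(X^2 + 2*lam*(X*((r1^2+a^2)+(r2^2+a^2)) + q^2)
     + lam^2*((r1^2+a^2)^2 + (r1^2+a^2)*(r2^2+a^2) + (r2^2+a^2)^2))"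
    unfolding X_def by (rule poly[OF D hq])
  define A where "A = r1^2+a^2"
  define B where "B = r2^2+a^2"
  have L: "4 * (m*a/X^2)^2 + (q/X)^4 = (4*m^2*a^2 + (q^2)^2) / X^4"
    using X by (simp add: power_divide power_mult_distrib field_simps)
  have R: "A/X * (B/X) * (1 + 2*lam*(A/X + B/X + (q/X)^2) + lam^2*((A/X)^2 + A/X*(B/X) + (B/X)^2))
     = A*B*(X^2 + 2*lam*(X*(A+B) + q^2) + lam^2*(A^2 + A*B + B^2)) / X^4"
    using X by (simp add: power_divide field_simps power2_eq_square power4_eq_xxxx)
  show ?thesis
    unfolding KNAdS_J_def KNAdS_Q_def KNAdS_reduced_area_def KNAdS_Xi_def X_def[symmetric]
      A_def[symmetric] B_def[symmetric] L R
    using P unfolding A_def B_def by simp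
qed

end
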